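(* Let $K$ be a field of characteristic zero, $x=(x_1,\dots,x_n)$, and let $f,h\in K[x]$ with $\deg(f-h)=1$. If there exists a vector $v\in K^n$ such that $\mathcal{J}h\cdot v=0\neq\mathcal{J}f\cdot v$, then $f$ is a tame coordinate.
   Context: $\mathcal{J}h=(\partial h/\partial x_1,\dots,\partial h/\partial x_n)$ is the Jacobian (row vector). A polynomial $f$ is a tame coordinate if it is a component of a tame automorphism, i.e. of an invertible polynomial map that is a composition of invertible linear (affine) maps and elementary maps $(x_1+p(x_2,\dots,x_n),x_2,\dots,x_n)$. *)

theory Defs
  imports "HOL-Library.Poly_Mapping"
begin

text \<open>Multivariate polynomials over 'a: finitely supported maps from monomials
(exponent vectors, nat-to-nat finitely supported, variable i has index i) to coefficients.
The ring K[x_1,...,x_n] is represented by the polynomials only involving the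
variables with indices 0,...,n-1.\<close>

type_synonym 'a mpoly = "(nat \<Rightarrow>\<^sub>0 nat) \<Rightarrow>\<^sub>0 'a"

definition Var :: "nat \<Rightarrow> 'a::comm_ring_1 mpoly" where
  "Var i = Poly_Mapping.single (Poly_Mapping.single i 1) 1"

definition Const :: "'a::comm_ring_1 \<Rightarrow> 'a mpoly" where
  "Const c = Poly_Mapping.single 0 c"

definition vars_in :: "nat set \<Rightarrow> 'a::comm_ring_1 mpoly \<Rightarrow> bool" where
  "vars_in S p \<longleftrightarrow> (\<forall>m\<in>Poly_Mapping.keys p. Poly_Mapping.keys m \<subseteq> S)"

definition mon_deg :: "(nat \<Rightarrow>\<^sub>0 nat) \<Rightarrow> nat" where
  "mon_deg m = (\<Sum>i\<in>Poly_Mapping.keys m. Poly_Mapping.lookup m i)"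

text \<open>Total degree (the zero polynomial gets 0 here; it never has degree 1).\<close>
definition total_degree :: "'a::comm_ring_1 mpoly \<Rightarrow> nat" where
  "total_degree p = Max (insert 0 (mon_deg ` Poly_Mapping.keys p))"

definition pderiv_mp :: "nat \<Rightarrow> 'a::comm_ring_1 mpoly \<Rightarrow> 'a mpoly" where
  "pderiv_mp i p = (\<Sum>m\<in>Poly_Mapping.keys p.
      Poly_Mapping.single (m - Poly_Mapping.single i 1) (of_nat (Poly_Mapping.lookup m i) * Poly_Mapping.lookup p m))"

text \<open>Jacobian row vector of p (in n variables) applied to the column vector v:
  (Jp) v = sum_i v_i * dp/dx_i.\<close>
definition jac_apply :: "nat \<Rightarrow> 'a::comm_ring_1 mpoly \<Rightarrow> (nat \<Rightarrow> 'a) \<Rightarrow> 'a mpoly" where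
  "jac_apply n p v = (\<Sum>i<n. Const (v i) * pderiv_mp i p)"

definition subst :: "(nat \<Rightarrow> 'a::comm_ring_1 mpoly) \<Rightarrow> 'a mpoly \<Rightarrow> 'a mpoly" where
  "subst s p = (\<Sum>m\<in>Poly_Mapping.keys p. Const (Poly_Mapping.lookup p m) * (\<Prod>i\<in>Poly_Mapping.keys m. s i ^ Poly_Mapping.lookup m i))"

text \<open>Polynomial maps K^n \<rightarrow> K^n are given by their components F 0, ..., F (n-1);
components with index \<ge> n are normalised to the identity.
comp_map n F G is the map F \<circ> G, i.e. (F \<circ> G)_i = F_i(G_0,...,G_(n-1)).\<close>
definition comp_map :: "nat \<Rightarrow> (nat \<Rightarrow> 'a::comm_ring_1 mpoly) \<Rightarrow> (nat \<Rightarrow> 'a mpoly) \<Rightarrow> (nat \<Rightarrow> 'a mpoly)" where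
  "comp_map n F G = (\<lambda>i. if i < n then subst G (F i) else Var i)"

definition affine_aut :: "nat \<Rightarrow> (nat \<Rightarrow> 'a::field mpoly) \<Rightarrow> bool" where
  "affine_aut n F \<longleftrightarrow> (\<exists>A B :: nat \<Rightarrow> nat \<Rightarrow> 'a. \<exists>b :: nat \<Rightarrow> 'a.
      (\<forall>i<n. \<forall>j<n. (\<Sum>k<n. A i k * B k j) = (if i = j then 1 else 0)) \<and>
      (\<forall>i<n. \<forall>j<n. (\<Sum>k<n. B i k * A k j) = (if i = j then 1 else 0)) \<and>
      F = (\<lambda>i. if i < n then (\<Sum>j<n. Const (A i j) * Var j) + Const (b i) else Var i))"

text \<open>Elementary maps (x_1 + p(x_2,...,x_n), x_2, ..., x_n); with 0-based indices
the first variable is x_0 and p involves only x_1, ..., x_(n-1).\<close>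
definition elementary_aut :: "nat \<Rightarrow> (nat \<Rightarrow> 'a::field mpoly) \<Rightarrow> bool" where
  "elementary_aut n F \<longleftrightarrow> 0 < n \<and> (\<exists>p. vars_in {1..<n} p \<and>
      F = (\<lambda>i. if i = 0 then Var 0 + p else Var i))"

inductive tame_aut :: "nat \<Rightarrow> (nat \<Rightarrow> 'a::field mpoly) \<Rightarrow> bool" for n where
  affine: "affine_aut n F \<Longrightarrow> tame_aut n F"
| elementary: "elementary_aut n F \<Longrightarrow> tame_aut n F"
| comp: "tame_aut n F \<Longrightarrow> tame_aut n G \<Longrightarrow> tame_aut n (comp_map n F G)"

definition tame_coordinate :: "nat \<Rightarrow> 'a::field mpoly \<Rightarrow> bool" where
  "tame_coordinate n f \<longleftrightarrow> (\<exists>F i. tame_aut n F \<and> i < n \<and> F i = f)"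

end

theory Submission
  imports Defs
begin

lemma pm_expand:
  fixes f :: "'a \<Rightarrow>\<^sub>0 'b::comm_monoid_add"
  shows "f = (\<Sum>k\<in>Poly_Mapping.keys f. Poly_Mapping.single k (Poly_Mapping.lookup f k))"
proof (rule poly_mapping_eqI)
  fix x
  show "Poly_Mapping.lookup f x = Poly_Mapping.lookup (\<Sum>k\<in>Poly_Mapping.keys f. Poly_Mapping.single k (Poly_Mapping.lookup f k)) x"
    by (auto simp: lookup_sum lookup_single when_def in_keys_iff)
qed

lemma pm_expand_superset:
  fixes f :: "'a \<Rightarrow>\<^sub>0 'b::comm_monoid_add"
  assumes "finite M" "Poly_Mapping.keys f \<subseteq> M"
  shows "f = (\<Sum>k\<in>M. Poly_Mapping.single k (Poly_Mapping.lookup f k))"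
proof -
  have "(\<Sum>k\<in>M. Poly_Mapping.single k (Poly_Mapping.lookup f k)) = (\<Sum>k\<in>Poly_Mapping.keys f. Poly_Mapping.single k (Poly_Mapping.lookup f k))"
    by (rule sum.mono_neutral_right[OF assms(1,2)]) (auto simp: in_keys_iff)
  then show ?thesis using pm_expand[of f] by simp
qed

lemma Const_0[simp]: "Const 0 = 0" by (simp add: Const_def)
lemma Const_1[simp]: "Const 1 = 1" by (simp add: Const_def)
lemma Const_add: "Const (a + b) = Const a + Const b" by (simp add: Const_def single_add)
lemma Const_mult: "Const a * Const b = Const (a * b)" by (simp add: Const_def mult_single)
lemma Const_sum: "Const (\<Sum>i\<in>A. f i) = (\<Sum>i\<in>A. Const (f i))"
  by (induction A rule: infinite_finite_induct) (simp_all add: Const_add)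

definition monom_s :: "(nat \<Rightarrow> 'a::comm_ring_1 mpoly) \<Rightarrow> (nat \<Rightarrow>\<^sub>0 nat) \<Rightarrow> 'a mpoly" where
  "monom_s s m = (\<Prod>i\<in>Poly_Mapping.keys m. s i ^ Poly_Mapping.lookup m i)"

lemma monom_s_superset:
  assumes "finite K" "Poly_Mapping.keys m \<subseteq> K"
  shows "monom_s s m = (\<Prod>i\<in>K. s i ^ Poly_Mapping.lookup m i)"
  unfolding monom_s_def
  by (rule prod.mono_neutral_left[OF assms]) (auto simp: in_keys_iff)

lemma monom_s_add: "monom_s s (a + b) = monom_s s a * monom_s s b"
proof -
  let ?K = "Poly_Mapping.keys a \<union> Poly_Mapping.keys b"
  have "monom_s s (a + b) = (\<Prod>i\<in>?K. s i ^ Poly_Mapping.lookup (a + b) i)"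
    by (rule monom_s_superset) (auto dest: set_mp[OF keys_add])
  also have "\<dots> = (\<Prod>i\<in>?K. s i ^ Poly_Mapping.lookup a i) * (\<Prod>i\<in>?K. s i ^ Poly_Mapping.lookup b i)"
    by (simp add: lookup_add power_add prod.distrib)
  also have "\<dots> = monom_s s a * monom_s s b"
    by (simp add: monom_s_superset[of ?K a] monom_s_superset[of ?K b])
  finally show ?thesis .
qed

lemma monom_s_0[simp]: "monom_s s 0 = 1" by (simp add: monom_s_def)
lemma monom_s_single1[simp]: "monom_s s (Poly_Mapping.single i 1) = s i" by (simp add: monom_s_def)

lemma subst_superset:
  assumes "finite M" "Poly_Mapping.keys p \<subseteq> M"
  shows "subst s p = (\<Sum>m\<in>M. Const (Poly_Mapping.lookup p m) * monom_s s m)"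
  unfolding subst_def monom_s_def
  by (rule sum.mono_neutral_left[OF assms]) (auto simp: in_keys_iff)

lemma subst_add: "subst s (p + q) = subst s p + subst s q"
proof -
  let ?M = "Poly_Mapping.keys p \<union> Poly_Mapping.keys q"
  have "subst s (p + q) = (\<Sum>m\<in>?M. Const (Poly_Mapping.lookup (p+q) m) * monom_s s m)"
    by (rule subst_superset) (auto dest: set_mp[OF keys_add])
  also have "\<dots> = subst s p + subst s q"
    by (simp add: subst_superset[of ?M] lookup_add Const_add distrib_right sum.distrib)
  finally show ?thesis .
qed

lemma subst_0[simp]: "subst s 0 = 0" by (simp add: subst_def)

lemma subst_sum: "subst s (\<Sum>i\<in>A. f i) = (\<Sum>i\<in>A. subst s (f i))"
  by (induction A rule: infinite_finite_induct) (simp_all add: subst_add)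

lemma subst_single: "subst s (Poly_Mapping.single m c) = Const c * monom_s s m"
  by (simp add: subst_superset[of "{m}"])

lemma subst_mult: "subst s (p * q) = subst s p * subst s q"
proof -
  have "p * q = (\<Sum>a\<in>Poly_Mapping.keys p. \<Sum>b\<in>Poly_Mapping.keys q.
      Poly_Mapping.single a (Poly_Mapping.lookup p a) * Poly_Mapping.single b (Poly_Mapping.lookup q b))"
    apply (subst pm_expand[of p], subst pm_expand[of q])
    apply (simp only: sum_distrib_left sum_distrib_right)
    apply (rule sum.swap)
    done
  then have "subst s (p * q) = (\<Sum>a\<in>Poly_Mapping.keys p. \<Sum>b\<in>Poly_Mapping.keys q.
      subst s (Poly_Mapping.single a (Poly_Mapping.lookup p a) * Poly_Mapping.single b (Poly_Mapping.lookup q b)))"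
    by (simp only: subst_sum)
  also have "\<dots> = (\<Sum>a\<in>Poly_Mapping.keys p. \<Sum>b\<in>Poly_Mapping.keys q.
      (Const (Poly_Mapping.lookup p a) * monom_s s a) * (Const (Poly_Mapping.lookup q b) * monom_s s b))"
  proof (intro sum.cong refl)
    fix a b
    show "subst s (Poly_Mapping.single a (Poly_Mapping.lookup p a) * Poly_Mapping.single b (Poly_Mapping.lookup q b)) =
      (Const (Poly_Mapping.lookup p a) * monom_s s a) * (Const (Poly_Mapping.lookup q b) * monom_s s b)"
      unfolding mult_single subst_single monom_s_add Const_mult[symmetric] by (simp only: mult_ac)
  qed
  also have "\<dots> = subst s p * subst s q"
    apply (simp only: subst_def monom_s_def sum_distrib_left sum_distrib_right)
    apply (rule sum.swap)
    done
  finally show ?thesis .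
qed

lemma subst_Const[simp]: "subst s (Const c) = Const c"
  by (simp add: Const_def subst_single)
lemma subst_Var[simp]: "subst s (Var i) = s i"
  by (simp add: Var_def subst_single monom_s_def)
lemma subst_1[simp]: "subst s 1 = 1"
  by (metis Const_1 subst_Const)
lemma subst_diff: "subst s (p - q) = subst s p - subst s q"
  by (metis add_diff_cancel diff_add_cancel subst_add)
lemma subst_power: "subst s (p ^ k) = subst s p ^ k"
  by (induction k) (simp_all add: subst_mult)

lemma Var_power: "Var i ^ k = Poly_Mapping.single (Poly_Mapping.single i k) 1"
  by (induction k) (simp_all add: Var_def mult_single single_add[symmetric] add.commute)

lemma prod_single1: "(\<Prod>i\<in>A. Poly_Mapping.single (g i) (1::'a::comm_ring_1)) = Poly_Mapping.single (\<Sum>i\<in>A. g i) 1"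
  by (induction A rule: infinite_finite_induct) (simp_all add: mult_single)

lemma single_as_prod: "Poly_Mapping.single m c = Const c * (\<Prod>i\<in>Poly_Mapping.keys m. Var i ^ Poly_Mapping.lookup m i)"
  by (simp add: Var_power prod_single1 pm_expand[of m, symmetric] Const_def mult_single)

lemma mpoly_induct[consumes 1]:
  assumes "vars_in S p"
    and C: "\<And>c. P (Const c)" and V: "\<And>i. i \<in> S \<Longrightarrow> P (Var i)"
    and A: "\<And>p q. P p \<Longrightarrow> P q \<Longrightarrow> P (p + q)"
    and M: "\<And>p q. P p \<Longrightarrow> P q \<Longrightarrow> P (p * q)"
  shows "P p"
proof -
  have P0: "P 0" using C[of 0] by simp
  have P1: "P 1" using C[of 1] by simp
  have pw: "P (Var i ^ k)" if "i \<in> S" for i k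
  proof (induction k)
    case 0 then show ?case using P1 by simp
  next
    case (Suc k) then show ?case using M[OF V[OF that] Suc] by simp
  qed
  have pr: "P (\<Prod>i\<in>K. Var i ^ g i)" if "K \<subseteq> S" "finite K" for K g
    using that(2,1)
  proof (induction K rule: finite_induct)
    case empty then show ?case using P1 by simp
  next
    case (insert x F)
    have "x \<in> S" "F \<subseteq> S" using insert(4) by auto
    then have "P (Var x ^ g x * (\<Prod>i\<in>F. Var i ^ g i))" using M[OF pw insert(3)] by blast
    then show ?case using insert by simp
  qed
  have sg: "P (Poly_Mapping.single m c)" if "Poly_Mapping.keys m \<subseteq> S" for m c
  proof -
    have "P (Const c * (\<Prod>i\<in>Poly_Mapping.keys m. Var i ^ Poly_Mapping.lookup m i))"
      by (rule M[OF C pr[OF that]]) simp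
    then show ?thesis by (simp only: single_as_prod[symmetric])
  qed
  have sm: "P (\<Sum>m\<in>K. Poly_Mapping.single m (Poly_Mapping.lookup p m))" if "K \<subseteq> Poly_Mapping.keys p" for K
  proof -
    have "finite K" by (rule finite_subset[OF that]) simp
    then show ?thesis using that
    proof (induction K rule: finite_induct)
      case empty then show ?case using P0 by simp
    next
      case (insert x F)
      have kx: "Poly_Mapping.keys x \<subseteq> S" using insert(4) assms(1) unfolding vars_in_def by blast
      then have "P (Poly_Mapping.single x (Poly_Mapping.lookup p x) + (\<Sum>m\<in>F. Poly_Mapping.single m (Poly_Mapping.lookup p m)))"
        using A[OF sg[OF kx] insert(3)] insert(4) by simp
      then show ?case using insert by simp
    qed
  qed
  show ?thesis by (subst pm_expand[of p]) (rule sm, simp)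
qed

lemma subst_subst: "subst s (subst t p) = subst (\<lambda>i. subst s (t i)) p"
proof -
  have "vars_in UNIV p" by (simp add: vars_in_def)
  then show ?thesis
    by (induction rule: mpoly_induct) (simp_all add: subst_add subst_mult)
qed

lemma subst_id:
  assumes "vars_in S p" "\<And>i. i \<in> S \<Longrightarrow> s i = Var i"
  shows "subst s p = p"
  using assms(1) by (induction rule: mpoly_induct) (simp_all add: subst_add subst_mult assms(2))

lemma lookup_minus_nat: "Poly_Mapping.lookup (m - Poly_Mapping.single i (1::nat)) j = Poly_Mapping.lookup m j - (if i = j then 1 else 0)"
  by (simp add: lookup_minus lookup_single when_def)

lemma lookup_add_single: "Poly_Mapping.lookup (m + Poly_Mapping.single i (1::nat)) j = Poly_Mapping.lookup m j + (if i = j then 1 else 0)"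
  by (simp add: lookup_add lookup_single when_def)

lemma minus_plus_single: "Poly_Mapping.lookup m i \<noteq> 0 \<Longrightarrow> (m - Poly_Mapping.single i (1::nat)) + Poly_Mapping.single i 1 = m"
  by (rule poly_mapping_eqI) (auto simp add: lookup_add lookup_minus lookup_single when_def)

lemma plus_minus_single: "(m + Poly_Mapping.single i (1::nat)) - Poly_Mapping.single i 1 = m"
  by (rule poly_mapping_eqI) (simp add: lookup_add lookup_minus lookup_single when_def)

lemma lookup_pderiv:
  "Poly_Mapping.lookup (pderiv_mp i p) u = of_nat (Poly_Mapping.lookup u i + 1) * Poly_Mapping.lookup p (u + Poly_Mapping.single i 1)"
proof -
  let ?e = "Poly_Mapping.single i (1::nat)"
  have "Poly_Mapping.lookup (pderiv_mp i p) u = (\<Sum>m\<in>Poly_Mapping.keys p. (if m - ?e = u then of_nat (Poly_Mapping.lookup m i) * Poly_Mapping.lookup p m else 0))"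
    unfolding pderiv_mp_def lookup_sum lookup_single when_def by simp
  also have "\<dots> = (\<Sum>m\<in>Poly_Mapping.keys p. (if m = u + ?e then of_nat (Poly_Mapping.lookup u i + 1) * Poly_Mapping.lookup p m else 0))"
  proof (rule sum.cong[OF refl])
    fix m
    show "(if m - ?e = u then of_nat (Poly_Mapping.lookup m i) * Poly_Mapping.lookup p m else 0) =
      (if m = u + ?e then of_nat (Poly_Mapping.lookup u i + 1) * Poly_Mapping.lookup p m else 0)"
    proof (cases "m = u + ?e")
      case True
      then show ?thesis by (simp add: plus_minus_single lookup_add lookup_single when_def)
    next
      case False
      have "Poly_Mapping.lookup m i = 0" if "m - ?e = u"
        using minus_plus_single[of m i] that False by auto
      then show ?thesis using False by auto
    qed
  qed
  also have "\<dots> = of_nat (Poly_Mapping.lookup u i + 1) * Poly_Mapping.lookup p (u + ?e)"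
    by (simp add: in_keys_iff)
  finally show ?thesis .
qed

lemma pderiv_add: "pderiv_mp i (p + q) = pderiv_mp i p + pderiv_mp i q"
  by (rule poly_mapping_eqI) (simp add: lookup_pderiv lookup_add distrib_left)

lemma pderiv_0[simp]: "pderiv_mp i 0 = 0"
  by (rule poly_mapping_eqI) (simp add: lookup_pderiv)

lemma pderiv_sum: "pderiv_mp i (\<Sum>k\<in>A. f k) = (\<Sum>k\<in>A. pderiv_mp i (f k))"
  by (induction A rule: infinite_finite_induct) (simp_all add: pderiv_add)

lemma pderiv_single: "pderiv_mp i (Poly_Mapping.single m c) = Poly_Mapping.single (m - Poly_Mapping.single i 1) (of_nat (Poly_Mapping.lookup m i) * c)"
proof (cases "Poly_Mapping.lookup m i = 0")
  case True
  show ?thesis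
  proof (rule poly_mapping_eqI)
    fix u
    have "u + Poly_Mapping.single i 1 \<noteq> m" using True by (auto simp: lookup_add lookup_single when_def)
    then show "Poly_Mapping.lookup (pderiv_mp i (Poly_Mapping.single m c)) u = Poly_Mapping.lookup (Poly_Mapping.single (m - Poly_Mapping.single i 1) (of_nat (Poly_Mapping.lookup m i) * c)) u"
      using True by (simp add: lookup_pderiv lookup_single when_def)
  qed
next
  case False
  show ?thesis
  proof (rule poly_mapping_eqI)
    fix u
    have "(m = u + Poly_Mapping.single i 1) = (m - Poly_Mapping.single i 1 = u)"
      using minus_plus_single[OF False] plus_minus_single[of u i] by metis
    moreover have "m = u + Poly_Mapping.single i 1 \<Longrightarrow> (of_nat (Poly_Mapping.lookup u i + 1) :: 'a) = of_nat (Poly_Mapping.lookup m i)"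
      by (simp add: lookup_add lookup_single when_def)
    ultimately show "Poly_Mapping.lookup (pderiv_mp i (Poly_Mapping.single m c)) u = Poly_Mapping.lookup (Poly_Mapping.single (m - Poly_Mapping.single i 1) (of_nat (Poly_Mapping.lookup m i) * c)) u"
      by (auto simp add: lookup_pderiv lookup_single when_def)
  qed
qed

lemma pderiv_Const[simp]: "pderiv_mp i (Const c) = 0"
  by (simp add: Const_def pderiv_single)

lemma pderiv_Var: "pderiv_mp j (Var i) = Const (if i = j then 1 else 0)"
  by (auto simp add: Var_def Const_def pderiv_single lookup_single when_def)

lemma pderiv_single_mult:
  "pderiv_mp i (Poly_Mapping.single a c * Poly_Mapping.single b d) =
   pderiv_mp i (Poly_Mapping.single a c) * Poly_Mapping.single b d + Poly_Mapping.single a c * pderiv_mp i (Poly_Mapping.single b d)"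
proof -
  let ?e = "Poly_Mapping.single i (1::nat)"
  have 1: "Poly_Mapping.single (a - ?e + b) (of_nat (Poly_Mapping.lookup a i) * c * d) =
      Poly_Mapping.single (a + b - ?e) (of_nat (Poly_Mapping.lookup a i) * c * d)"
  proof (cases "Poly_Mapping.lookup a i = 0")
    case False
    then have "a - ?e + b = a + b - ?e"
      by (intro poly_mapping_eqI) (auto simp add: lookup_minus lookup_add lookup_single when_def)
    then show ?thesis by simp
  qed simp
  have 2: "Poly_Mapping.single (a + (b - ?e)) (c * (of_nat (Poly_Mapping.lookup b i) * d)) =
      Poly_Mapping.single (a + b - ?e) (of_nat (Poly_Mapping.lookup b i) * c * d)"
  proof (cases "Poly_Mapping.lookup b i = 0")
    case False
    then have "a + (b - ?e) = a + b - ?e"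
      by (intro poly_mapping_eqI) (auto simp add: lookup_minus lookup_add lookup_single when_def)
    then show ?thesis by (simp add: mult_ac)
  qed simp
  show ?thesis
    unfolding mult_single pderiv_single 1 2
    by (simp add: lookup_add single_add[symmetric] algebra_simps)
qed

lemma pderiv_mult: "pderiv_mp i (p * q) = pderiv_mp i p * q + p * pderiv_mp i q"
proof -
  have e: "p * q = (\<Sum>a\<in>Poly_Mapping.keys p. \<Sum>b\<in>Poly_Mapping.keys q.
      Poly_Mapping.single a (Poly_Mapping.lookup p a) * Poly_Mapping.single b (Poly_Mapping.lookup q b))"
    apply (subst pm_expand[of p], subst pm_expand[of q])
    apply (simp only: sum_distrib_left sum_distrib_right)
    apply (rule sum.swap)
    done
  have ep: "pderiv_mp i p * q = (\<Sum>a\<in>Poly_Mapping.keys p. \<Sum>b\<in>Poly_Mapping.keys q.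
      pderiv_mp i (Poly_Mapping.single a (Poly_Mapping.lookup p a)) * Poly_Mapping.single b (Poly_Mapping.lookup q b))"
    apply (subst pm_expand[of p], subst pm_expand[of q])
    apply (simp only: pderiv_sum sum_distrib_left sum_distrib_right)
    apply (rule sum.swap)
    done
  have eq: "p * pderiv_mp i q = (\<Sum>a\<in>Poly_Mapping.keys p. \<Sum>b\<in>Poly_Mapping.keys q.
      Poly_Mapping.single a (Poly_Mapping.lookup p a) * pderiv_mp i (Poly_Mapping.single b (Poly_Mapping.lookup q b)))"
    apply (subst pm_expand[of p], subst pm_expand[of q])
    apply (simp only: pderiv_sum sum_distrib_left sum_distrib_right)
    apply (rule sum.swap)
    done
  show ?thesis
    unfolding e ep eq pderiv_sum pderiv_single_mult sum.distrib[symmetric] ..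
qed

lemma vars_in_add: "vars_in S p \<Longrightarrow> vars_in S q \<Longrightarrow> vars_in S (p + q)"
  unfolding vars_in_def
proof (intro ballI)
  fix m assume "\<forall>m\<in>Poly_Mapping.keys p. Poly_Mapping.keys m \<subseteq> S" "\<forall>m\<in>Poly_Mapping.keys q. Poly_Mapping.keys m \<subseteq> S"
    "m \<in> Poly_Mapping.keys (p + q)"
  moreover have "m \<in> Poly_Mapping.keys p \<union> Poly_Mapping.keys q" using keys_add calculation(3) by (rule subsetD)
  ultimately show "Poly_Mapping.keys m \<subseteq> S" by blast
qed

lemma vars_in_diff: "vars_in S p \<Longrightarrow> vars_in S q \<Longrightarrow> vars_in S (p - q)"
  unfolding vars_in_def
proof (intro ballI)
  fix m assume "\<forall>m\<in>Poly_Mapping.keys p. Poly_Mapping.keys m \<subseteq> S" "\<forall>m\<in>Poly_Mapping.keys q. Poly_Mapping.keys m \<subseteq> S"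
    "m \<in> Poly_Mapping.keys (p - q)"
  moreover have "m \<in> Poly_Mapping.keys p \<union> Poly_Mapping.keys q" using keys_diff calculation(3) by (rule subsetD)
  ultimately show "Poly_Mapping.keys m \<subseteq> S" by blast
qed

lemma vars_in_mult: "vars_in S p \<Longrightarrow> vars_in S q \<Longrightarrow> vars_in S (p * q)"
  unfolding vars_in_def
proof
  fix m assume a: "\<forall>m\<in>Poly_Mapping.keys p. Poly_Mapping.keys m \<subseteq> S" "\<forall>m\<in>Poly_Mapping.keys q. Poly_Mapping.keys m \<subseteq> S"
    and m: "m \<in> Poly_Mapping.keys (p * q)"
  have "m \<in> {a + b | a b. a \<in> Poly_Mapping.keys p \<and> b \<in> Poly_Mapping.keys q}"
    using keys_mult[of p q] m by (rule subsetD)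
  then obtain x y where xy: "m = x + y" "x \<in> Poly_Mapping.keys p" "y \<in> Poly_Mapping.keys q"
    by blast
  have "Poly_Mapping.keys x \<subseteq> S" "Poly_Mapping.keys y \<subseteq> S" using a xy by auto
  then show "Poly_Mapping.keys m \<subseteq> S" using keys_add[of x y] xy(1) by auto
qed

lemma vars_in_Const: "vars_in S (Const c)"
  by (simp add: vars_in_def Const_def)

lemma vars_in_Var: "i \<in> S \<Longrightarrow> vars_in S (Var i)"
  by (simp add: vars_in_def Var_def)

lemma vars_in_0: "vars_in S 0"
  by (simp add: vars_in_def)

lemma vars_in_sum: "(\<And>k. k \<in> A \<Longrightarrow> vars_in S (f k)) \<Longrightarrow> vars_in S (\<Sum>k\<in>A. f k)"
  by (induction A rule: infinite_finite_induct) (simp_all add: vars_in_0 vars_in_add)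

lemma vars_in_mono: "vars_in S p \<Longrightarrow> S \<subseteq> T \<Longrightarrow> vars_in T p"
  unfolding vars_in_def by blast

lemma vars_in_subst:
  assumes "\<And>i. vars_in S (t i)"
  shows "vars_in S (subst t p)"
proof -
  have "vars_in UNIV p" by (simp add: vars_in_def)
  then show ?thesis
    by (induction rule: mpoly_induct) (simp_all add: subst_add subst_mult vars_in_add vars_in_mult vars_in_Const assms)
qed

lemma chain_rule:
  assumes "vars_in {..<N} q"
  shows "pderiv_mp j (subst s q) = (\<Sum>i<N. subst s (pderiv_mp i q) * pderiv_mp j (s i))"
  using assms
proof (induction rule: mpoly_induct)
  case (1 c)
  then show ?case by simp
next
  case (2 i)
  have "(\<Sum>l<N. subst s (pderiv_mp l (Var i)) * pderiv_mp j (s l)) = (\<Sum>l<N. if l = i then pderiv_mp j (s l) else 0)"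
    by (rule sum.cong) (auto simp: pderiv_Var)
  also have "\<dots> = pderiv_mp j (s i)" using 2 by simp
  finally show ?case by simp
next
  case (3 p q)
  then show ?case by (simp add: subst_add pderiv_add distrib_right sum.distrib)
next
  case (4 p q)
  have "(\<Sum>i<N. subst s (pderiv_mp i (p * q)) * pderiv_mp j (s i)) =
     (\<Sum>i<N. (subst s (pderiv_mp i p) * pderiv_mp j (s i)) * subst s q + subst s p * (subst s (pderiv_mp i q) * pderiv_mp j (s i)))"
    by (rule sum.cong[OF refl]) (simp only: pderiv_mult subst_add subst_mult algebra_simps)
  also have "\<dots> = (\<Sum>i<N. subst s (pderiv_mp i p) * pderiv_mp j (s i)) * subst s q + subst s p * (\<Sum>i<N. subst s (pderiv_mp i q) * pderiv_mp j (s i))"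
    by (simp only: sum.distrib sum_distrib_left sum_distrib_right)
  finally show ?case using 4 by (simp only: subst_mult pderiv_mult)
qed

lemma pderiv_zero_vars:
  assumes "vars_in S g" "pderiv_mp i g = (0::'a::field_char_0 mpoly)"
  shows "vars_in (S - {i}) g"
  unfolding vars_in_def
proof
  fix m assume m: "m \<in> Poly_Mapping.keys g"
  have "Poly_Mapping.lookup m i = 0"
  proof (rule ccontr)
    assume "Poly_Mapping.lookup m i \<noteq> 0"
    then have eq: "(m - Poly_Mapping.single i 1) + Poly_Mapping.single i 1 = m" by (rule minus_plus_single)
    have "Poly_Mapping.lookup (pderiv_mp i g) (m - Poly_Mapping.single i 1) \<noteq> 0"
      unfolding lookup_pderiv eq using m by (simp add: in_keys_iff del: of_nat_Suc)
    then show False using assms(2) by simp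
  qed
  then have "i \<notin> Poly_Mapping.keys m" by (simp add: in_keys_iff)
  then show "Poly_Mapping.keys m \<subseteq> S - {i}" using assms(1) m unfolding vars_in_def by blast
qed

definition sw :: "nat \<Rightarrow> nat \<Rightarrow> nat" where
  "sw k i = (if i = 0 then k else if i = k then 0 else i)"

definition Bm :: "(nat \<Rightarrow> 'a::field) \<Rightarrow> nat \<Rightarrow> nat \<Rightarrow> nat \<Rightarrow> 'a" where
  "Bm v k i j = (if j = 0 then v i else if j = sw k i then 1 else 0)"

definition Am :: "(nat \<Rightarrow> 'a::field) \<Rightarrow> nat \<Rightarrow> nat \<Rightarrow> nat \<Rightarrow> 'a" where
  "Am v k j i = (if j = 0 then (if i = k then 1 / v k else 0)
      else (if i = sw k j then 1 else 0) - (if i = k then v (sw k j) / v k else 0))"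

lemma sw_sw[simp]: "sw k (sw k i) = i" by (simp add: sw_def)
lemma sw_k[simp]: "sw k k = 0" by (simp add: sw_def)
lemma sw_0_iff: "sw k i = 0 \<longleftrightarrow> i = k" by (auto simp add: sw_def)
lemma sw_less: "k < n \<Longrightarrow> i < n \<Longrightarrow> sw k i < n" by (auto simp add: sw_def)

lemma lessThan_split0: "0 < n \<Longrightarrow> {..<n} = insert 0 {1..<(n::nat)}" by auto

lemma BA:
  assumes "k < n" "v k \<noteq> 0" "i < n" "j < n"
  shows "(\<Sum>l<n. Bm v k i l * Am v k l j) = (if i = j then 1 else 0)"
proof -
  have n: "0 < n" using assms by auto
  have "(\<Sum>l\<in>{1..<n}. Bm v k i l * Am v k l j) = (\<Sum>l\<in>{1..<n}. if l = sw k i then Am v k (sw k i) j else 0)"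
    by (rule sum.cong) (auto simp: Bm_def)
  also have "\<dots> = (if sw k i \<in> {1..<n} then Am v k (sw k i) j else 0)"
    by simp
  finally have s: "(\<Sum>l\<in>{1..<n}. Bm v k i l * Am v k l j) = (if sw k i \<in> {1..<n} then Am v k (sw k i) j else 0)" .
  show ?thesis
  proof (cases "i = k")
    case True
    then show ?thesis unfolding lessThan_split0[OF n] using s assms
      by (auto simp add: Bm_def Am_def)
  next
    case False
    then have "sw k i \<in> {1..<n}" using sw_less[OF assms(1,3)] sw_0_iff[of k i] by auto
    moreover have "sw k i \<noteq> 0" using False sw_0_iff by auto
    ultimately show ?thesis unfolding lessThan_split0[OF n] using s assms False
      by (auto simp add: Bm_def Am_def field_simps)
  qed
qed

lemma AB:
  assumes "k < n" "v k \<noteq> 0" "j < n" "i < n"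
  shows "(\<Sum>l<n. Am v k j l * Bm v k l i) = (if j = i then 1 else 0)"
proof (cases "j = 0")
  case True
  have "(\<Sum>l<n. Am v k j l * Bm v k l i) = (\<Sum>l<n. if l = k then Bm v k k i / v k else 0)"
    by (rule sum.cong) (auto simp: Am_def True)
  also have "\<dots> = Bm v k k i / v k" using assms(1) by simp
  also have "\<dots> = (if j = i then 1 else 0)" using True assms(2) by (auto simp: Bm_def)
  finally show ?thesis .
next
  case False
  have "(\<Sum>l<n. Am v k j l * Bm v k l i) = (\<Sum>l<n. (if l = sw k j then Bm v k (sw k j) i else 0) - (if l = k then v (sw k j) / v k * Bm v k k i else 0))"
    by (rule sum.cong) (auto simp: Am_def False)
  also have "\<dots> = Bm v k (sw k j) i - v (sw k j) / v k * Bm v k k i"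
    using assms(1) sw_less[OF assms(1,3)] by (simp add: sum_subtractf)
  also have "\<dots> = (if j = i then 1 else 0)" using False assms(2)
    by (auto simp: Bm_def sw_0_iff)
  finally show ?thesis .
qed

lemma mon_deg_le1:
  assumes "mon_deg m \<le> 1"
  shows "m = 0 \<or> (\<exists>i. m = Poly_Mapping.single i 1 \<and> Poly_Mapping.keys m = {i})"
proof (cases "Poly_Mapping.keys m = {}")
  case True then show ?thesis by simp
next
  case False
  then obtain i where i: "i \<in> Poly_Mapping.keys m" by blast
  have pos: "Poly_Mapping.lookup m l \<ge> 1" if "l \<in> Poly_Mapping.keys m" for l
    using that by (simp add: in_keys_iff)
  have K: "Poly_Mapping.keys m = {i}"
  proof (rule ccontr)
    assume "Poly_Mapping.keys m \<noteq> {i}"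
    then obtain l where l: "l \<in> Poly_Mapping.keys m" "l \<noteq> i" using i by blast
    have "(\<Sum>x\<in>{i,l}. Poly_Mapping.lookup m x) \<le> mon_deg m"
      unfolding mon_deg_def by (rule sum_mono2) (use i l in auto)
    moreover have "(\<Sum>x\<in>{i,l}. Poly_Mapping.lookup m x) \<ge> 2"
      using l pos[OF i] pos[OF l(1)] by simp
    ultimately show False using assms by simp
  qed
  then have "Poly_Mapping.lookup m i = 1" using assms pos[OF i] by (simp add: mon_deg_def)
  then have "m = Poly_Mapping.single i 1"
    by (intro poly_mapping_eqI) (use K in \<open>auto simp: lookup_single when_def in_keys_iff\<close>)
  then show ?thesis using K by blast
qed

theorem proposition5p6:
  fixes f h :: "'a::field_char_0 mpoly" and n :: nat and v :: "nat \<Rightarrow> 'a"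
  assumes "vars_in {..<n} f" and "vars_in {..<n} h"
    and "total_degree (f - h) = 1"
    and "jac_apply n h v = 0" and "jac_apply n f v \<noteq> 0"
  shows "tame_coordinate n f"
proof -
  define d where "d = f - h"
  have fd: "f = h + d" by (simp add: d_def)
  have vd: "vars_in {..<n} d" unfolding d_def using assms(1,2) by (rule vars_in_diff)
  have deg: "mon_deg m \<le> 1" if "m \<in> Poly_Mapping.keys d" for m
  proof -
    have "mon_deg m \<le> Max (insert 0 (mon_deg ` Poly_Mapping.keys d))"
      by (rule Max_ge) (use that in auto)
    then show ?thesis using assms(3) unfolding d_def total_degree_def by simp
  qed
  let ?M = "insert 0 ((\<lambda>i. Poly_Mapping.single i (1::nat)) ` {..<n})"
  have keysd: "Poly_Mapping.keys d \<subseteq> ?M"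
  proof
    fix m assume m: "m \<in> Poly_Mapping.keys d"
    from mon_deg_le1[OF deg[OF m]] show "m \<in> ?M"
    proof
      assume "\<exists>i. m = Poly_Mapping.single i 1 \<and> Poly_Mapping.keys m = {i}"
      then obtain i where "m = Poly_Mapping.single i 1" "Poly_Mapping.keys m = {i}" by blast
      moreover have "Poly_Mapping.keys m \<subseteq> {..<n}" using vd m unfolding vars_in_def by blast
      ultimately show ?thesis by auto
    qed simp
  qed
  define c0 where "c0 = Poly_Mapping.lookup d 0"
  define a where "a i = Poly_Mapping.lookup d (Poly_Mapping.single i 1)" for i
  have inj1: "inj_on (\<lambda>i. Poly_Mapping.single i (1::nat)) {..<n}"
  proof (rule inj_onI)
    fix x y assume "Poly_Mapping.single x (1::nat) = Poly_Mapping.single y 1"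
    then have "Poly_Mapping.lookup (Poly_Mapping.single x (1::nat)) x = Poly_Mapping.lookup (Poly_Mapping.single y 1) x" by simp
    then show "x = y" by (auto simp: lookup_single when_def split: if_splits)
  qed
  have nz: "0 \<notin> (\<lambda>i. Poly_Mapping.single i (1::nat)) ` {..<n}"
  proof
    assume "0 \<in> (\<lambda>i. Poly_Mapping.single i (1::nat)) ` {..<n}"
    then obtain i :: nat where "0 = Poly_Mapping.single i (1::nat)" by blast
    then have "Poly_Mapping.lookup (0::nat \<Rightarrow>\<^sub>0 nat) i = Poly_Mapping.lookup (Poly_Mapping.single i (1::nat)) i" by simp
    then show False by simp
  qed
  have dexp: "d = Const c0 + (\<Sum>i<n. Const (a i) * Var i)"
  proof -
    have "d = (\<Sum>m\<in>?M. Poly_Mapping.single m (Poly_Mapping.lookup d m))"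
      by (rule pm_expand_superset[OF _ keysd]) simp
    also have "\<dots> = Poly_Mapping.single 0 c0 + (\<Sum>i<n. Poly_Mapping.single (Poly_Mapping.single i 1) (a i))"
      apply (subst sum.insert[OF _ nz], simp)
      apply (subst sum.reindex[OF inj1])
      apply (simp add: c0_def a_def)
      done
    also have "\<dots> = Const c0 + (\<Sum>i<n. Const (a i) * Var i)"
      by (simp add: Const_def Var_def mult_single)
    finally show ?thesis .
  qed
  have pdV: "pderiv_mp j (Const c * Var i) = Const (if i = j then c else 0)" for j i c
    by (simp add: pderiv_mult pderiv_Var Const_mult)
  have pd: "pderiv_mp j d = Const (a j)" if "j < n" for j
  proof -
    have "pderiv_mp j d = (\<Sum>i<n. Const (if i = j then a i else 0))"
      by (subst dexp) (simp add: pderiv_add pderiv_sum pdV)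
    also have "\<dots> = Const (a j)" using that by (simp add: Const_sum[symmetric])
    finally show ?thesis .
  qed
  define lam where "lam = (\<Sum>j<n. v j * a j)"
  have jf: "jac_apply n f v = Const lam"
  proof -
    have "jac_apply n f v = jac_apply n h v + jac_apply n d v"
      unfolding jac_apply_def fd by (simp add: pderiv_add distrib_left sum.distrib)
    moreover have "jac_apply n d v = (\<Sum>j<n. Const (v j * a j))"
      unfolding jac_apply_def by (rule sum.cong) (simp_all add: pd Const_mult)
    ultimately show ?thesis using assms(4) by (simp add: lam_def Const_sum)
  qed
  have lam0: "lam \<noteq> 0" using assms(5) jf by auto
  have "\<exists>k<n. v k \<noteq> 0"
  proof (rule ccontr)
    assume "\<not> (\<exists>k<n. v k \<noteq> 0)"
    then have "lam = 0" unfolding lam_def by (intro sum.neutral) auto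
    then show False using lam0 by simp
  qed
  then obtain k where k: "k < n" "v k \<noteq> 0" by blast
  have n0: "0 < n" using k by simp
  define Af where "Af = (\<lambda>i. if i < n then (\<Sum>j<n. Const (Am v k i j) * Var j) + Const 0 else (Var i :: 'a mpoly))"
  define Bf where "Bf = (\<lambda>i. (\<Sum>j<n. Const (Bm v k i j) * Var j) :: 'a mpoly)"
  have Aaff: "affine_aut n Af"
    unfolding affine_aut_def Af_def
    apply (rule exI[of _ "Am v k"], rule exI[of _ "Bm v k"], rule exI[of _ "\<lambda>_. 0"])
    using AB[of k n v, OF k] BA[of k n v, OF k] by auto
  have ABv: "subst Af (Bf i) = Var i" if "i < n" for i
  proof -
    have "subst Af (Bf i) = (\<Sum>j<n. Const (Bm v k i j) * (\<Sum>l<n. Const (Am v k j l) * Var l))"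
      unfolding Bf_def subst_sum by (intro sum.cong refl) (simp add: subst_mult Af_def)
    also have "\<dots> = (\<Sum>l<n. Const (\<Sum>j<n. Bm v k i j * Am v k j l) * Var l)"
      apply (simp only: Const_sum sum_distrib_left sum_distrib_right Const_mult[symmetric] mult.assoc)
      apply (rule sum.swap)
      done
    also have "\<dots> = (\<Sum>l<n. if l = i then Var l else 0)"
      using BA[of k n v, OF k that] by (intro sum.cong) auto
    also have "\<dots> = Var i" using that by simp
    finally show ?thesis .
  qed
  have bk: "subst Af (subst Bf q) = q" if "vars_in {..<n} q" for q
    unfolding subst_subst by (rule subst_id[OF that]) (simp add: ABv)
  have vB: "vars_in {..<n} (Bf i)" for i
    unfolding Bf_def by (intro vars_in_sum vars_in_mult vars_in_Const vars_in_Var) simp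
  have dB0: "pderiv_mp 0 (Bf i) = Const (v i)" for i
  proof -
    have "pderiv_mp 0 (Bf i) = (\<Sum>j<n. Const (if j = 0 then Bm v k i j else 0))"
      unfolding Bf_def pderiv_sum by (simp add: pdV)
    also have "\<dots> = Const (v i)" using n0 by (simp add: Const_sum[symmetric] Bm_def)
    finally show ?thesis .
  qed
  have g0: "pderiv_mp 0 (subst Bf h) = 0"
  proof -
    have "pderiv_mp 0 (subst Bf h) = (\<Sum>i<n. subst Bf (pderiv_mp i h) * Const (v i))"
      using chain_rule[OF assms(2)] dB0 by simp
    also have "\<dots> = subst Bf (jac_apply n h v)"
      unfolding jac_apply_def by (simp add: subst_sum subst_mult mult.commute)
    also have "\<dots> = 0" using assms(4) by simp
    finally show ?thesis .
  qed
  have vg: "vars_in {1..<n} (subst Bf h)"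
  proof -
    have "vars_in {..<n} (subst Bf h)" by (rule vars_in_subst) (rule vB)
    from pderiv_zero_vars[OF this g0] show ?thesis
      by (rule vars_in_mono) auto
  qed
  define Rb where "Rb i = (\<Sum>j\<in>{1..<n}. Const (Bm v k i j) * Var j :: 'a mpoly)" for i
  have Bsplit: "Bf i = Const (v i) * Var 0 + Rb i" for i
    unfolding Bf_def Rb_def lessThan_split0[OF n0] by (simp add: Bm_def)
  have vRb: "vars_in {1..<n} (Rb i)" for i
    unfolding Rb_def by (intro vars_in_sum vars_in_mult vars_in_Const vars_in_Var) simp
  define R where "R = Const c0 + (\<Sum>i<n. Const (a i) * Rb i)"
  have vR: "vars_in {1..<n} R"
    unfolding R_def by (intro vars_in_add vars_in_sum vars_in_mult vars_in_Const vRb)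
  have s1: "subst Bf d = Const c0 + (\<Sum>i<n. Const (a i) * Bf i)"
    by (subst dexp) (simp add: subst_add subst_sum subst_mult)
  have s2: "(\<Sum>i<n. Const (a i) * Bf i) = (\<Sum>i<n. Const (v i * a i) * Var 0) + (\<Sum>i<n. Const (a i) * Rb i)"
    by (simp add: Bsplit distrib_left sum.distrib Const_mult[symmetric] mult_ac)
  have s3: "(\<Sum>i<n. Const (v i * a i) * Var 0) = Const lam * Var 0"
    by (simp add: lam_def Const_sum sum_distrib_right)
  have sBd: "subst Bf d = Const lam * Var 0 + R"
    unfolding s1 s2 s3 R_def by (simp add: algebra_simps)
  define p where "p = Const (1/lam) * (subst Bf h + R)"
  have vp: "vars_in {1..<n} p"
    unfolding p_def by (intro vars_in_mult vars_in_add vars_in_Const vg vR)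
  define E where "E = (\<lambda>i. if i = 0 then Var 0 + p else (Var i :: 'a mpoly))"
  have Eel: "elementary_aut n E" unfolding elementary_aut_def E_def using n0 vp by blast
  define Sm where "Sm (i::nat) (j::nat) = (if i = j then (if i = 0 then lam else 1) else (0::'a))" for i j
  define Si where "Si (i::nat) (j::nat) = (if i = j then (if i = 0 then 1/lam else 1) else (0::'a))" for i j
  define S where "S = (\<lambda>i. if i < n then (\<Sum>j<n. Const (Sm i j) * Var j) + Const 0 else (Var i :: 'a mpoly))"
  have SS1: "(\<Sum>l<n. Sm i l * Si l j) = (if i = j then 1 else 0)" if "i < n" "j < n" for i j
  proof -
    have "(\<Sum>l<n. Sm i l * Si l j) = (\<Sum>l<n. if l = i then Sm i i * Si i j else 0)"
      by (rule sum.cong) (auto simp: Sm_def)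
    also have "\<dots> = (if i = j then 1 else 0)" using that lam0 by (simp add: Sm_def Si_def)
    finally show ?thesis .
  qed
  have SS2: "(\<Sum>l<n. Si i l * Sm l j) = (if i = j then 1 else 0)" if "i < n" "j < n" for i j
  proof -
    have "(\<Sum>l<n. Si i l * Sm l j) = (\<Sum>l<n. if l = i then Si i i * Sm i j else 0)"
      by (rule sum.cong) (auto simp: Si_def)
    also have "\<dots> = (if i = j then 1 else 0)" using that lam0 by (simp add: Sm_def Si_def)
    finally show ?thesis .
  qed
  have Saff: "affine_aut n S"
    unfolding affine_aut_def S_def
    apply (rule exI[of _ Sm], rule exI[of _ Si], rule exI[of _ "\<lambda>_. 0"])
    using SS1 SS2 by auto
  define G where "G = comp_map n E Af"
  define F where "F = comp_map n S G"
  have tame: "tame_aut n F"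
    unfolding F_def G_def
    by (intro tame_aut.comp tame_aut.affine tame_aut.elementary Saff Eel Aaff)
  have G0: "G 0 = subst Af (Var 0 + p)" unfolding G_def comp_map_def E_def using n0 by simp
  have "F 0 = subst G (\<Sum>j<n. Const (Sm 0 j) * Var j)"
    unfolding F_def comp_map_def S_def using n0 by simp
  also have "\<dots> = (\<Sum>j<n. if j = 0 then Const lam * G 0 else 0)"
    unfolding subst_sum by (rule sum.cong) (auto simp: subst_mult Sm_def)
  also have "\<dots> = Const lam * G 0" using n0 by simp
  also have "\<dots> = subst Af (Const lam * (Var 0 + p))" unfolding G0 by (simp add: subst_mult)
  also have "Const lam * (Var 0 + p) = subst Bf f"
  proof -
    have "Const lam * Const (1 / lam) = (1 :: 'a mpoly)" using lam0 by (simp add: Const_mult)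
    then have "Const lam * p = subst Bf h + R" unfolding p_def by (simp add: mult.assoc[symmetric])
    then show ?thesis unfolding fd subst_add sBd by (simp add: algebra_simps)
  qed
  also have "subst Af (subst Bf f) = f" by (rule bk[OF assms(1)])
  finally have "F 0 = f" .
  then show ?thesis unfolding tame_coordinate_def using tame n0 by blast
qed

end
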